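(* There exists a dichotomous hedonic game such that no finite sequence of IS deviations starting from the singleton partition ends in an individually stable partition.
   Context: A dichotomous hedonic game (DHG) on agents $N$ gives each agent $i$ a function $v_i$ from the coalitions containing $i$ to $\{0,1\}$ (approve/disapprove), and $i$ weakly prefers $C$ to $C'$ iff $v_i(C)\ge v_i(C')$. The singleton partition is $\{\{i\}:i\in N\}$. An IS deviation of agent $i$ from partition $\pi$ to $\pi'$ is a move of $i$ alone from $\pi(i)$ into another coalition of $\pi$ or into a new singleton such that $i$ strictly prefers $\pi'(i)$ to $\pi(i)$ and every $j\in\pi'(i)\setminus\{i\}$ weakly prefers $\pi'(j)$ to $\pi(j)$. A partition is individually stable (IS) if no IS deviation is possible from it. *)

theory Defs
  imports Main "HOL-Library.Disjoint_Sets"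
begin

text \<open>A dichotomous hedonic game on a finite agent set N (agents are naturals):
  v i C says whether agent i approves coalition C (only meaningful for i \<in> C \<subseteq> N).\<close>

type_synonym dhg = "nat \<Rightarrow> nat set \<Rightarrow> bool"

definition singleton_partition :: "nat set \<Rightarrow> nat set set" where
  "singleton_partition N = (\<lambda>i. {i}) ` N"

definition coal :: "nat set set \<Rightarrow> nat \<Rightarrow> nat set" where
  "coal P i = (THE C. C \<in> P \<and> i \<in> C)"

text \<open>Move agent i out of its coalition into coalition T (T = {} means a new singleton).\<close>
definition move :: "nat set set \<Rightarrow> nat \<Rightarrow> nat set \<Rightarrow> nat set set" where
  "move P i T = (P - {coal P i, T}) \<union> {insert i T}
      \<union> (if coal P i - {i} = {} then {} else {coal P i - {i}})"

text \<open>IS deviation from P to P'. Preferences are dichotomous: i strictly prefers C to C'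
  iff v i C and not v i C'; j weakly prefers C to C' iff v j C' implies v j C.\<close>
definition IS_deviation :: "nat set \<Rightarrow> dhg \<Rightarrow> nat set set \<Rightarrow> nat set set \<Rightarrow> bool" where
  "IS_deviation N v P P' \<longleftrightarrow>
     (\<exists>i\<in>N. \<exists>T \<in> (P - {coal P i}) \<union> {{}}.
        P' = move P i T \<and>
        v i (insert i T) \<and> \<not> v i (coal P i) \<and>
        (\<forall>j\<in>T. v j T \<longrightarrow> v j (insert i T)))"

definition individually_stable :: "nat set \<Rightarrow> dhg \<Rightarrow> nat set set \<Rightarrow> bool" where
  "individually_stable N v P \<longleftrightarrow> partition_on N P \<and> \<not> (\<exists>P'. IS_deviation N v P P')"

end

theory Submission imports Defs begin
definition vv :: dhg where
  "vv i C = (if i = 0 then 1 \<in> C \<and> 2 \<notin> C else if i = 1 then 2 \<in> C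
             else if i = 2 then 0 \<in> C \<and> 1 \<notin> C else False)"

lemma coal_eq: "C \<in> P \<Longrightarrow> i \<in> C \<Longrightarrow> (\<And>D. D \<in> P \<Longrightarrow> i \<in> D \<Longrightarrow> D = C) \<Longrightarrow> coal P i = C"
  unfolding coal_def apply (rule the_equality) apply blast apply blast done

abbreviation "S0 \<equiv> {{0::nat},{1},{2}}"
abbreviation "S1 \<equiv> {{0::nat},{1,2}}"
abbreviation "S2 \<equiv> {{1::nat},{0,2}}"
abbreviation "S3 \<equiv> {{2::nat},{0,1}}"

lemma c0: "coal S0 0 = {0}" "coal S0 1 = {1}" "coal S0 2 = {2}"
  by (rule coal_eq, simp, simp, (simp; elim disjE; simp))+
lemma c1: "coal S1 0 = {0}" "coal S1 1 = {1,2}" "coal S1 2 = {1,2}"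
  by (rule coal_eq, simp, simp, (simp; elim disjE; simp))+
lemma c2: "coal S2 0 = {0,2}" "coal S2 1 = {1}" "coal S2 2 = {0,2}"
  by (rule coal_eq, simp, simp, (simp; elim disjE; simp))+
lemma c3: "coal S3 0 = {0,1}" "coal S3 1 = {0,1}" "coal S3 2 = {2}"
  by (rule coal_eq, simp, simp, (simp; elim disjE; simp))+

lemma devE:
  assumes "IS_deviation {0,1,2} v P Q"
  obtains (a) i T where "i \<in> {0,1,2}" "T = {} \<or> (T \<in> P \<and> T \<noteq> coal P i)" "Q = move P i T" "v i (insert i T)" "\<not> v i (coal P i)" "\<forall>j\<in>T. v j T \<longrightarrow> v j (insert i T)"
proof -
  from assms obtain i T where "i \<in> {0,1,2}" "T \<in> (P - {coal P i}) \<union> {{}}" "Q = move P i T"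
    "v i (insert i T)" "\<not> v i (coal P i)" "\<forall>j\<in>T. v j T \<longrightarrow> v j (insert i T)"
    unfolding IS_deviation_def by blast
  moreover have "T = {} \<or> (T \<in> P \<and> T \<noteq> coal P i)" using calculation(2) by blast
  ultimately show ?thesis using that by blast
qed

lemma cl0: "IS_deviation {0,1,2} vv S0 Q \<Longrightarrow> Q \<in> {S0,S1,S2,S3}"
  apply (erule devE)
  apply (simp only: insert_iff empty_iff simp_thms)
  apply (elim disjE conjE; hypsubst)
  apply (unfold move_def)
  apply (simp_all only: c0 insert_iff empty_iff simp_thms)
  apply (unfold vv_def)
  apply simp_all
  apply (code_simp+)?
  done

lemma cl1: "IS_deviation {0,1,2} vv S1 Q \<Longrightarrow> Q \<in> {S0,S1,S2,S3}"
  apply (erule devE)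
  apply (simp only: insert_iff empty_iff simp_thms)
  apply (elim disjE conjE; hypsubst)
  apply (unfold move_def)
  apply (simp_all only: c1 insert_iff empty_iff simp_thms)
  apply (unfold vv_def)
  apply simp_all
  apply (code_simp+)?
  done

lemma cl2: "IS_deviation {0,1,2} vv S2 Q \<Longrightarrow> Q \<in> {S0,S1,S2,S3}"
  apply (erule devE)
  apply (simp only: insert_iff empty_iff simp_thms)
  apply (elim disjE conjE; hypsubst)
  apply (unfold move_def)
  apply (simp_all only: c2 insert_iff empty_iff simp_thms)
  apply (unfold vv_def)
  apply simp_all
  apply (code_simp+)?
  done

lemma cl3: "IS_deviation {0,1,2} vv S3 Q \<Longrightarrow> Q \<in> {S0,S1,S2,S3}"
  apply (erule devE)
  apply (simp only: insert_iff empty_iff simp_thms)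
  apply (elim disjE conjE; hypsubst)
  apply (unfold move_def)
  apply (simp_all only: c3 insert_iff empty_iff simp_thms)
  apply (unfold vv_def)
  apply simp_all
  apply (code_simp+)?
  done

lemma d0: "IS_deviation {0,1,2} vv S0 S1"
  unfolding IS_deviation_def
  apply (rule bexI[of _ 1])
   apply (rule bexI[of _ "{2}"])
    apply (unfold move_def c0)
    apply (unfold vv_def)
    apply simp_all
  apply (code_simp+)?
  done

lemma d1: "IS_deviation {0,1,2} vv S1 S2"
  unfolding IS_deviation_def
  apply (rule bexI[of _ 2])
   apply (rule bexI[of _ "{0}"])
    apply (unfold move_def c1)
    apply (unfold vv_def)
    apply simp_all
  apply (code_simp+)?
  done

lemma d2: "IS_deviation {0,1,2} vv S2 S3"
  unfolding IS_deviation_def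
  apply (rule bexI[of _ 0])
   apply (rule bexI[of _ "{1}"])
    apply (unfold move_def c2)
    apply (unfold vv_def)
    apply simp_all
  apply (code_simp+)?
  done

lemma d3: "IS_deviation {0,1,2} vv S3 S1"
  unfolding IS_deviation_def
  apply (rule bexI[of _ 1])
   apply (rule bexI[of _ "{2}"])
    apply (unfold move_def c3)
    apply (unfold vv_def)
    apply simp_all
  apply (code_simp+)?
  done

lemma sp: "singleton_partition {0,1,2} = S0"
  by (simp add: singleton_partition_def)

theorem proposition6p1:
  shows "\<exists>(N :: nat set) (v :: dhg). finite N \<and>
           (\<forall>P. (IS_deviation N v)\<^sup>*\<^sup>* (singleton_partition N) P \<longrightarrow>
                \<not> individually_stable N v P)"
proof (intro exI[of _ "{0,1,2}"] exI[of _ vv] conjI allI impI)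
  show "finite {0::nat,1,2}" by simp
  fix P assume "(IS_deviation {0,1,2} vv)\<^sup>*\<^sup>* (singleton_partition {0,1,2}) P"
  then have "P = S0 \<or> P = S1 \<or> P = S2 \<or> P = S3"
  proof (induction rule: rtranclp_induct)
    case base
    show ?case unfolding sp by (rule disjI1) (rule refl)
  next
    case (step y z)
    from step.IH show ?case
    proof (elim disjE)
      assume "y = S0" then show ?case using step.hyps(2) cl0 by (simp only: insert_iff empty_iff simp_thms)
    next
      assume "y = S1" then show ?case using step.hyps(2) cl1 by (simp only: insert_iff empty_iff simp_thms)
    next
      assume "y = S2" then show ?case using step.hyps(2) cl2 by (simp only: insert_iff empty_iff simp_thms)
    next
      assume "y = S3" then show ?case using step.hyps(2) cl3 by (simp only: insert_iff empty_iff simp_thms)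
    qed
  qed
  then show "\<not> individually_stable {0,1,2} vv P"
    unfolding individually_stable_def
  proof (elim disjE)
    assume "P = S0" then show "\<not> (partition_on {0,1,2} P \<and> \<not> (\<exists>P'. IS_deviation {0,1,2} vv P P'))" using d0 by blast
  next
    assume "P = S1" then show "\<not> (partition_on {0,1,2} P \<and> \<not> (\<exists>P'. IS_deviation {0,1,2} vv P P'))" using d1 by blast
  next
    assume "P = S2" then show "\<not> (partition_on {0,1,2} P \<and> \<not> (\<exists>P'. IS_deviation {0,1,2} vv P P'))" using d2 by blast
  next
    assume "P = S3" then show "\<not> (partition_on {0,1,2} P \<and> \<not> (\<exists>P'. IS_deviation {0,1,2} vv P P'))" using d3 by blast
  qed
qed

end
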